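(* Consider the deadline-constrained data aggregation model described in the context, with sink deadline $D$ (a positive integer) and all sensor nodes being sources. Then the maximum value of $QoA$ achievable in an optimal aggregation tree is $2^D-1$, and the maximum value of $QoA$ achievable in the worst-case aggregation tree is $D$.
   Context: A wireless sensor network is a connected graph $\mathcal{G}=(\mathcal{V}\cup\{S\},\xi)$, where $S$ is the sink and $\mathcal{V}$ is the set of sensor nodes. Time is slotted, every transmission takes one slot, and the interference model is one-hop: two transmissions toward the same receiver in the same slot collide. Data aggregation is performed on a spanning tree $\psi$ of $\mathcal{G}$ rooted at $S$ (an aggregation tree). A schedule assigns to each participating sensor node $i$ a waiting time $W_i\in\{0,1,\dots,D-1\}$ (node $i$ transmits its aggregated data to its parent in slot $W_i$), and $W_S=D$. A schedule is feasible if, for every node $i$ (including $S$), the participating children of $i$ have pairwise distinct waiting times, all strictly smaller than $W_i$. Let $n_i=1$ if node $i$ participates and $n_i=0$ otherwise, and let $H^\psi(i)$ be the set consisting of $i$ and all its ancestors in $\psi$ other than $S$. With $F_i=1$ if $i$ is a source node and $F_i=0$ otherwise, the quality of aggregation is $QoA=\sum_{i\in\mathcal{V}}F_i\prod_{j\in H^\psi(i)}n_j$, the number of source nodes whose whole path to the sink participates. The maximum $QoA$ of a tree $\psi$ is the maximum of $QoA$ over all feasible schedules on $\psi$. "Optimal tree" and "worst-case tree" refer to the aggregation trees with the largest and smallest maximum $QoA$, respectively (the worst case being a chain rooted at the sink). *)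

theory Defs
  imports Main
begin

definition agg_tree :: "'a set \<Rightarrow> 'a \<Rightarrow> ('a \<Rightarrow> 'a) \<Rightarrow> bool" where
  "agg_tree V s p \<longleftrightarrow> finite V \<and> s \<notin> V \<and>
     (\<forall>i\<in>V. p i \<in> insert s V \<and> (\<exists>k. (p ^^ k) i = s))"

definition anc :: "'a \<Rightarrow> ('a \<Rightarrow> 'a) \<Rightarrow> 'a \<Rightarrow> 'a set" where
  "anc s p i = {(p ^^ k) i | k. \<forall>m\<le>k. (p ^^ m) i \<noteq> s}"

definition wait :: "'a \<Rightarrow> nat \<Rightarrow> ('a \<Rightarrow> nat) \<Rightarrow> 'a \<Rightarrow> nat" where
  "wait s D W j = (if j = s then D else W j)"

text \<open>Feasible schedule: participation indicator n (n i = True iff n_i = 1) and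
  waiting times W.\<close>
definition feasible :: "'a set \<Rightarrow> 'a \<Rightarrow> ('a \<Rightarrow> 'a) \<Rightarrow> nat \<Rightarrow> ('a \<Rightarrow> bool) \<Rightarrow> ('a \<Rightarrow> nat) \<Rightarrow> bool" where
  "feasible V s p D n W \<longleftrightarrow>
     (\<forall>i\<in>V. n i \<longrightarrow> W i < D) \<and>
     (\<forall>j\<in>insert s {i\<in>V. n i}.
        inj_on W {i\<in>V. n i \<and> p i = j} \<and>
        (\<forall>i\<in>V. n i \<and> p i = j \<longrightarrow> W i < wait s D W j))"

text \<open>QoA when all sensor nodes are sources (F_i = 1 for all i).\<close>
definition qoa :: "'a set \<Rightarrow> 'a \<Rightarrow> ('a \<Rightarrow> 'a) \<Rightarrow> ('a \<Rightarrow> bool) \<Rightarrow> nat" where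
  "qoa V s p n = card {i\<in>V. \<forall>j\<in>anc s p i. n j}"

definition max_qoa :: "'a set \<Rightarrow> 'a \<Rightarrow> ('a \<Rightarrow> 'a) \<Rightarrow> nat \<Rightarrow> nat" where
  "max_qoa V s p D = Max {qoa V s p n | n W. feasible V s p D n W}"

definition chain_tree :: "'a set \<Rightarrow> 'a \<Rightarrow> ('a \<Rightarrow> 'a) \<Rightarrow> bool" where
  "chain_tree V s p \<longleftrightarrow> s \<notin> V \<and> (\<exists>xs. distinct xs \<and> set xs = V \<and> xs \<noteq> [] \<and>
      p (xs ! 0) = s \<and> (\<forall>k. Suc k < length xs \<longrightarrow> p (xs ! Suc k) = xs ! k))"

end

theory Submission
  imports Defs
begin
fun lsb :: "nat \<Rightarrow> nat" where
  "lsb m = (if m = 0 \<or> odd m then 0 else Suc (lsb (m div 2)))"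
declare lsb.simps[simp del]
lemma lsb_dvd: "m > 0 \<Longrightarrow> 2^(lsb m) dvd m \<and> odd (m div 2^(lsb m))"
proof (induction m rule: lsb.induct)
  case (1 m)
  show ?case
  proof (cases "odd m")
    case True then show ?thesis by (simp add: lsb.simps)
  next
    case False
    have "m > 0" using "1.prems" .
    then have m2: "m div 2 > 0" using False by (auto elim: evenE)
    have l: "lsb m = Suc (lsb (m div 2))" using False \<open>m>0\<close> by (simp add: lsb.simps)
    have IH: "2^(lsb (m div 2)) dvd m div 2 \<and> odd (m div 2 div 2^(lsb (m div 2)))"
      using "1.IH" False m2 \<open>0<m\<close> by blast
    have e: "m = 2 * (m div 2)" using False by simp
    have d1: "2^lsb m dvd m" using IH l e by (metis mult_dvd_mono power_Suc dvd_refl)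
    have "m div 2^lsb m = m div 2 div 2^(lsb (m div 2))" using l by (simp add: div_mult2_eq)
    then show ?thesis using IH d1 by simp
  qed
qed

lemma lsb_ge: assumes "m > 0" "2^k dvd m" shows "k \<le> lsb m"
proof (rule ccontr)
  assume "\<not> k \<le> lsb m"
  then have "2^(Suc (lsb m)) dvd m" using assms(2) by (meson dvd_trans le_imp_power_dvd not_le Suc_leI)
  moreover obtain q where q: "m = 2^lsb m * q" "odd q" using lsb_dvd[OF assms(1)] by (metis dvd_mult_div_cancel)
  ultimately have "2^lsb m * 2 dvd 2^lsb m * q" by (simp add: mult.commute)
  then have "2 dvd q" by (simp add: nat_mult_dvd_cancel_disj)
  then show False using q by simp
qed

definition par :: "nat \<Rightarrow> nat" where "par m = m - 2^lsb m"

lemma par_facts: assumes "m > 0"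
  shows "par m + 2^lsb m = m" "2^Suc (lsb m) dvd par m" "par m < m"
proof -
  obtain q where q: "m = 2^lsb m * q" "odd q" using lsb_dvd[OF assms] by (metis dvd_mult_div_cancel)
  then obtain r where r: "q = 2*r+1" by (metis oddE)
  have "par m = 2^lsb m * (2*r)" unfolding par_def using q r by (simp add: algebra_simps)
  then show "2^Suc (lsb m) dvd par m" by (simp add: mult.assoc mult.left_commute)
  show "par m + 2^lsb m = m" unfolding par_def using q r by (simp add: algebra_simps)
  then show "par m < m" by (metis less_add_same_cancel1 zero_less_power zero_less_numeral)
qed

lemma par_lsb: "m > 0 \<Longrightarrow> par m > 0 \<Longrightarrow> lsb m < lsb (par m)"
  using lsb_ge par_facts(2) by (metis Suc_le_eq)

lemma par_reach: "\<exists>k. (par^^k) m = 0"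
proof (induction m rule: less_induct)
  case (less m)
  show ?case
  proof (cases "m = 0")
    case True then show ?thesis by (metis funpow_0)
  next
    case False
    then obtain k where "(par^^k) (par m) = 0" using less par_facts(3) by blast
    then have "(par^^Suc k) m = 0" by (simp only: funpow_Suc_right comp_apply)
    then show ?thesis by blast
  qed
qed

lemma anc_sink: "anc s p s = {}"
  unfolding anc_def by auto

lemma anc_rec:
  assumes "i \<noteq> s"
  shows "anc s p i = insert i (anc s p (p i))"
proof
  show "anc s p i \<subseteq> insert i (anc s p (p i))"
  proof
    fix x assume "x \<in> anc s p i"
    then obtain k where x: "x = (p^^k) i" and c: "\<forall>m\<le>k. (p^^m) i \<noteq> s"
      unfolding anc_def by blast
    show "x \<in> insert i (anc s p (p i))"
    proof (cases k)
      case 0 then show ?thesis using x by simp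
    next
      case (Suc k')
      have "x = (p^^k') (p i)" using x Suc by (simp only: funpow_Suc_right comp_apply)
      moreover have "\<forall>m\<le>k'. (p^^m) (p i) \<noteq> s"
      proof (intro allI impI)
        fix m assume "m \<le> k'"
        then have "Suc m \<le> k" using Suc by simp
        then have "(p^^Suc m) i \<noteq> s" using c by blast
        then show "(p^^m) (p i) \<noteq> s" by (simp add: funpow_Suc_right del: funpow.simps)
      qed
      ultimately show ?thesis unfolding anc_def by blast
    qed
  qed
next
  show "insert i (anc s p (p i)) \<subseteq> anc s p i"
  proof
    fix x assume "x \<in> insert i (anc s p (p i))"
    then show "x \<in> anc s p i"
    proof
      assume "x = i"
      have "x = (p^^0) i" "\<forall>m\<le>0. (p^^m) i \<noteq> s" using \<open>x = i\<close> assms by auto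
      then show ?thesis unfolding anc_def by blast
    next
      assume "x \<in> anc s p (p i)"
      then obtain k where x: "x = (p^^k) (p i)" and c: "\<forall>m\<le>k. (p^^m) (p i) \<noteq> s"
        unfolding anc_def by blast
      have "x = (p^^Suc k) i" using x by (simp only: funpow_Suc_right comp_apply)
      moreover have "\<forall>m\<le>Suc k. (p^^m) i \<noteq> s"
      proof (intro allI impI)
        fix m assume "m \<le> Suc k"
        show "(p^^m) i \<noteq> s"
        proof (cases m)
          case 0 then show ?thesis using assms by simp
        next
          case (Suc m') then have "m' \<le> k" using \<open>m \<le> Suc k\<close> by simp
          then have "(p^^m') (p i) \<noteq> s" using c by blast
          then show ?thesis using Suc by (simp add: funpow_Suc_right del: funpow.simps)
        qed
      qed
      ultimately show ?thesis unfolding anc_def by blast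
    qed
  qed
qed

lemma anc_self: "i \<noteq> s \<Longrightarrow> i \<in> anc s p i"
  using anc_rec by fastforce

lemma lemA:
  assumes T: "agg_tree V s p" and F: "feasible V s p D n W"
  shows "(p^^k) i = s \<Longrightarrow> i \<in> V \<Longrightarrow> (\<forall>j\<in>anc s p i. n j) \<Longrightarrow>
    anc s p i \<subseteq> V \<and> (\<forall>j\<in>anc s p i. j \<noteq> i \<longrightarrow> W i < W j)"
proof (induction k arbitrary: i)
  case 0 then show ?case using T unfolding agg_tree_def by auto
next
  case (Suc k)
  have sV: "s \<notin> V" and pV: "p i \<in> insert s V" using T Suc.prems(2) unfolding agg_tree_def by auto
  have ins: "i \<noteq> s" using sV Suc.prems(2) by auto
  have A: "anc s p i = insert i (anc s p (p i))" using anc_rec[OF ins] .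
  show ?case
  proof (cases "p i = s")
    case True
    then show ?thesis using A anc_sink[of s p] Suc.prems(2) by simp
  next
    case False
    with pV have piV: "p i \<in> V" by simp
    have k: "(p^^k) (p i) = s" using Suc.prems(1) by (simp only: funpow_Suc_right comp_apply)
    have cp: "\<forall>j\<in>anc s p (p i). n j" using Suc.prems(3) A by auto
    note IH = Suc.IH[OF k piV cp]
    have pin: "p i \<in> anc s p (p i)" using anc_self[OF False] .
    have ni: "n i" using Suc.prems(3) A by auto
    have npi: "n (p i)" using cp pin by auto
    have jin: "p i \<in> insert s {x\<in>V. n x}" using piV npi by simp
    have "\<forall>x\<in>V. n x \<and> p x = p i \<longrightarrow> W x < wait s D W (p i)"
      using F jin unfolding feasible_def by blast
    then have "W i < wait s D W (p i)" using ni Suc.prems(2) by blast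
    then have lt: "W i < W (p i)" using False by (simp add: wait_def)
    show ?thesis
    proof
      show "anc s p i \<subseteq> V" using A IH Suc.prems(2) by auto
      show "\<forall>j\<in>anc s p i. j \<noteq> i \<longrightarrow> W i < W j"
      proof (intro ballI impI)
        fix j assume "j \<in> anc s p i" "j \<noteq> i"
        then have "j \<in> anc s p (p i)" using A by auto
        then show "W i < W j" using IH lt by (cases "j = p i") auto
      qed
    qed
  qed
qed

definition cnt :: "'a set \<Rightarrow> 'a \<Rightarrow> ('a \<Rightarrow> 'a) \<Rightarrow> ('a \<Rightarrow> bool) \<Rightarrow> 'a \<Rightarrow> bool" where
  "cnt V s p n i \<longleftrightarrow> i \<in> V \<and> (\<forall>j\<in>anc s p i. n j)"

lemma lemA':
  assumes T: "agg_tree V s p" and F: "feasible V s p D n W" and c: "cnt V s p n i"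
  shows "anc s p i \<subseteq> V" "\<And>j. j\<in>anc s p i \<Longrightarrow> j \<noteq> i \<Longrightarrow> W i < W j"
    "\<And>j. j\<in>anc s p i \<Longrightarrow> W i \<le> W j"
proof -
  obtain k where "(p^^k) i = s" using T c unfolding agg_tree_def cnt_def by auto
  then have X: "anc s p i \<subseteq> V \<and> (\<forall>j\<in>anc s p i. j \<noteq> i \<longrightarrow> W i < W j)"
    using lemA[OF T F] c unfolding cnt_def by blast
  then show "anc s p i \<subseteq> V" by blast
  show "\<And>j. j\<in>anc s p i \<Longrightarrow> j \<noteq> i \<Longrightarrow> W i < W j" using X by blast
  show "\<And>j. j\<in>anc s p i \<Longrightarrow> W i \<le> W j" using X by (metis less_imp_le order_refl)
qed

lemma lem_par:
  assumes T: "agg_tree V s p" and F: "feasible V s p D n W" and c: "cnt V s p n i"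
    and ps: "p i \<noteq> s"
  shows "p i \<in> V" "W i < W (p i)" "cnt V s p n (p i)" "n i" "i \<noteq> s"
    "anc s p i = insert i (anc s p (p i))"
proof -
  have sV: "s \<notin> V" and pV: "p i \<in> insert s V" using T c unfolding agg_tree_def cnt_def by auto
  show ins: "i \<noteq> s" using sV c unfolding cnt_def by auto
  show A: "anc s p i = insert i (anc s p (p i))" using anc_rec[OF ins] .
  show piV: "p i \<in> V" using pV ps by simp
  show cp: "cnt V s p n (p i)" using c A piV unfolding cnt_def by auto
  have npi: "n (p i)" using cp anc_self[OF ps] unfolding cnt_def by auto
  show ni: "n i" using c A unfolding cnt_def by auto
  have jin: "p i \<in> insert s {x\<in>V. n x}" using piV npi by simp
  have "\<forall>x\<in>V. n x \<and> p x = p i \<longrightarrow> W x < wait s D W (p i)"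
    using F jin unfolding feasible_def by blast
  then have "W i < wait s D W (p i)" using ni c unfolding cnt_def by blast
  then show "W i < W (p i)" using ps by (simp add: wait_def)
qed

lemma lem_sinkcase:
  assumes T: "agg_tree V s p" and F: "feasible V s p D n W" and c: "cnt V s p n i"
    and c': "cnt V s p n i'" and ps: "p i = s" and eq: "W ` anc s p i = W ` anc s p i'"
  shows "p i' = s"
proof (rule ccontr)
  assume ps': "p i' \<noteq> s"
  have ins: "i \<noteq> s" using T c unfolding agg_tree_def cnt_def by auto
  have "anc s p i = insert i (anc s p (p i))" using anc_rec[OF ins] .
  then have "anc s p i = {i}" using ps anc_sink[of s p] by simp
  then have S: "W ` anc s p i' = {W i}" using eq by simp
  have A': "anc s p i' = insert i' (anc s p (p i'))" using lem_par[OF T F c' ps'] by simp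
  have "W (p i') \<in> W ` anc s p i'" using A' anc_self[OF ps'] by auto
  moreover have "W i' \<in> W ` anc s p i'" using A' by auto
  ultimately have "W (p i') = W i'" using S by simp
  then show False using lem_par(2)[OF T F c' ps'] by simp
qed

lemma lemB:
  assumes T: "agg_tree V s p" and F: "feasible V s p D n W"
  shows "(p^^k) i = s \<Longrightarrow> cnt V s p n i \<Longrightarrow> cnt V s p n i' \<Longrightarrow>
     W ` anc s p i = W ` anc s p i' \<Longrightarrow> i = i'"
proof (induction k arbitrary: i i')
  case 0 then show ?case using T unfolding agg_tree_def cnt_def by auto
next
  case (Suc k)
  note c = Suc.prems(2) and c' = Suc.prems(3) and eq = Suc.prems(4)
  have ins: "i \<noteq> s" "i' \<noteq> s" using T c c' unfolding agg_tree_def cnt_def by auto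
  have "W i \<in> W ` anc s p i'" using eq anc_self[OF ins(1)] by (metis imageI)
  then obtain x where "x \<in> anc s p i'" "W i = W x" by auto
  then have le1: "W i' \<le> W i" using lemA'(3)[OF T F c'] by simp
  have "W i' \<in> W ` anc s p i" using eq anc_self[OF ins(2)] by (metis imageI)
  then obtain y where "y \<in> anc s p i" "W i' = W y" by auto
  then have le2: "W i \<le> W i'" using lemA'(3)[OF T F c] by simp
  have eqW: "W i = W i'" using le1 le2 by simp
  have ni: "n i" "n i'" using c c' anc_self[OF ins(1)] anc_self[OF ins(2)] unfolding cnt_def by auto
  have iV: "i \<in> V" "i' \<in> V" using c c' unfolding cnt_def by auto
  show ?case
  proof (cases "p i = s")
    case True
    then have True': "p i' = s" using lem_sinkcase[OF T F c c' True eq] by simp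
    have "inj_on W {x\<in>V. n x \<and> p x = s}" using F unfolding feasible_def by blast
    then show ?thesis using eqW True True' ni iV by (auto dest: inj_onD)
  next
    case False
    have False': "p i' \<noteq> s" using lem_sinkcase[OF T F c' c _ eq[symmetric]] False by blast
    have red: "W ` anc s p (p j) = W ` anc s p j - {W j}" if cj: "cnt V s p n j" and pj: "p j \<noteq> s" for j
    proof -
      have A: "anc s p j = insert j (anc s p (p j))" using lem_par[OF T F cj pj] by simp
      have "W j \<notin> W ` anc s p (p j)"
      proof
        assume "W j \<in> W ` anc s p (p j)"
        then obtain z where "z \<in> anc s p (p j)" "W j = W z" by auto
        moreover have "W (p j) \<le> W z" using lemA'(3)[OF T F lem_par(3)[OF T F cj pj]] calculation(1) .
        ultimately show False using lem_par(2)[OF T F cj pj] by simp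
      qed
      then show ?thesis using A by auto
    qed
    have k: "(p^^k) (p i) = s" using Suc.prems(1) by (simp only: funpow_Suc_right comp_apply)
    have "W ` anc s p (p i) = W ` anc s p (p i')" using red[OF c False] red[OF c' False'] eq eqW by simp
    then have pe: "p i = p i'" using Suc.IH[OF k lem_par(3)[OF T F c False] lem_par(3)[OF T F c' False']] by simp
    have "p i \<in> insert s {x\<in>V. n x}" using lem_par(1,3)[OF T F c False] anc_self[OF False]
      unfolding cnt_def by auto
    then have "inj_on W {x\<in>V. n x \<and> p x = p i}" using F unfolding feasible_def by blast
    then show ?thesis using eqW pe ni iV by (auto dest: inj_onD)
  qed
qed

lemma qoa_bound1:
  assumes T: "agg_tree V s p" and F: "feasible V s p D n W"
  shows "qoa V s p n \<le> 2^D - 1"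
proof -
  let ?C = "{i\<in>V. \<forall>j\<in>anc s p i. n j}"
  let ?f = "\<lambda>i. W ` anc s p i"
  have inj: "inj_on ?f ?C"
  proof (rule inj_onI)
    fix i i' assume a: "i \<in> ?C" "i' \<in> ?C" "W ` anc s p i = W ` anc s p i'"
    obtain k where "(p^^k) i = s" using T a(1) unfolding agg_tree_def by auto
    then show "i = i'" using lemB[OF T F] a unfolding cnt_def by blast
  qed
  have sub: "?f ` ?C \<subseteq> Pow {..<D} - {{}}"
  proof
    fix X assume "X \<in> ?f ` ?C"
    then obtain i where i: "i \<in> ?C" "X = W ` anc s p i" by blast
    have c: "cnt V s p n i" using i unfolding cnt_def by simp
    have AV: "anc s p i \<subseteq> V" using lemA'(1)[OF T F c] .
    have "i \<noteq> s" using T i unfolding agg_tree_def by auto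
    then have ne: "X \<noteq> {}" using i anc_self by fastforce
    have "X \<subseteq> {..<D}"
    proof
      fix x assume "x \<in> X"
      then obtain j where j: "j \<in> anc s p i" "x = W j" using i by auto
      then have "j \<in> V" "n j" using AV i by auto
      then show "x \<in> {..<D}" using F j unfolding feasible_def by auto
    qed
    then show "X \<in> Pow {..<D} - {{}}" using ne by auto
  qed
  have "card ?C = card (?f ` ?C)" using card_image[OF inj] by simp
  also have "\<dots> \<le> card (Pow {..<D} - {{}})" by (rule card_mono) (use sub in auto)
  also have "\<dots> = 2^D - 1" by (simp add: card_Pow)
  finally show ?thesis unfolding qoa_def .
qed

lemma qoa_le_card: "finite V \<Longrightarrow> qoa V s p n \<le> card V"
  unfolding qoa_def by (rule card_mono) auto

lemma feasible_none: "feasible V s p D (\<lambda>_. False) W"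
  unfolding feasible_def by auto

lemma maxset_fin: "finite V \<Longrightarrow> finite {qoa V s p n | n W. feasible V s p D n W}"
  by (rule finite_subset[of _ "{..card V}"]) (auto simp: qoa_le_card)

lemma maxset_ne: "{qoa V s p n | n W. feasible V s p D n W} \<noteq> {}"
  using feasible_none[of V s p D "\<lambda>_. 0"] by blast

lemma max_le: "finite V \<Longrightarrow> (\<And>n W. feasible V s p D n W \<Longrightarrow> qoa V s p n \<le> b) \<Longrightarrow> max_qoa V s p D \<le> b"
  unfolding max_qoa_def using maxset_fin[of V s p D] maxset_ne[of V s p D]
  by (subst Max_le_iff) auto

lemma max_ge: "finite V \<Longrightarrow> feasible V s p D n W \<Longrightarrow> qoa V s p n \<le> max_qoa V s p D"
  unfolding max_qoa_def using maxset_fin[of V s p D]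
  by (intro Max_ge) auto


lemma opt_tree:
  assumes "D \<ge> 1"
  shows "agg_tree {1..<2^D} (0::nat) par \<and> max_qoa {1..<2^D} 0 par D = 2^D - 1"
proof -
  let ?V = "{1..<(2::nat)^D}"
  have T: "agg_tree ?V 0 par"
    unfolding agg_tree_def
  proof (intro conjI ballI)
    show "finite ?V" by simp
    show "(0::nat) \<notin> ?V" by simp
    fix i assume i: "i \<in> ?V"
    then have "par i < i" using par_facts(3) by simp
    then show "par i \<in> insert 0 ?V" using i by auto
    show "\<exists>k. (par^^k) i = 0" by (rule par_reach)
  qed
  have lsbD: "lsb i < D" if "i \<in> ?V" for i
  proof -
    have "2^lsb i \<le> i" using lsb_dvd[of i] that by (simp add: dvd_imp_le)
    moreover have "i < 2^D" using that by simp
    ultimately have a: "2^lsb i < (2::nat)^D" by (rule le_less_trans)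
    show ?thesis using nat_power_less_imp_less[OF _ a] by simp
  qed
  have F: "feasible ?V 0 par D (\<lambda>_. True) lsb"
    unfolding feasible_def
  proof (intro conjI)
    show "\<forall>i\<in>?V. True \<longrightarrow> lsb i < D" using lsbD by simp
  next
    show "\<forall>j\<in>insert 0 {i \<in> ?V. True}. inj_on lsb {i\<in>?V. True \<and> par i = j} \<and> (\<forall>i\<in>?V. True \<and> par i = j \<longrightarrow> lsb i < wait 0 D lsb j)"
    proof (rule ballI, rule conjI)
    fix j assume j: "j \<in> insert 0 {i \<in> ?V. True}"
    show "inj_on lsb {i\<in>?V. True \<and> par i = j}"
    proof (rule inj_onI)
      fix x y assume "x \<in> {i\<in>?V. True \<and> par i = j}" "y \<in> {i\<in>?V. True \<and> par i = j}" "lsb x = lsb y"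
      then have "x > 0" "y > 0" "par x = par y" "lsb x = lsb y" by auto
      then show "x = y" using par_facts(1)[of x] par_facts(1)[of y] by metis
    qed
    show "\<forall>i\<in>?V. True \<and> par i = j \<longrightarrow> lsb i < wait 0 D lsb j"
    proof (intro ballI impI)
      fix i assume i: "i \<in> ?V" "True \<and> par i = j"
      show "lsb i < wait 0 D lsb j"
      proof (cases "j = 0")
        case True then show ?thesis using lsbD i by (simp add: wait_def)
      next
        case False then show ?thesis using par_lsb[of i] i by (simp add: wait_def)
      qed
    qed
  qed
  qed
  have e: "{i\<in>?V. \<forall>j\<in>anc 0 par i. True} = ?V" by blast
  have q: "qoa ?V 0 par (\<lambda>_. True) = 2^D - 1" unfolding qoa_def e by simp
  have "max_qoa ?V 0 par D \<le> 2^D-1"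
    using max_le[of ?V 0 par D "2^D-1"] qoa_bound1[OF T] by simp
  moreover have "2^D - 1 \<le> max_qoa ?V 0 par D" using max_ge[OF _ F] q by simp
  ultimately show ?thesis using T by simp
qed

lemma build_list:
  assumes T: "agg_tree V s p"
  shows "d \<le> card V \<Longrightarrow> \<exists>xs. distinct xs \<and> length xs = d \<and> set xs \<subseteq> V \<and>
     (\<forall>k<length xs. p (xs!k) = s \<or> p (xs!k) \<in> set (take k xs))"
proof (induction d)
  case 0 then show ?case by (intro exI[of _ "[]"]) simp
next
  case (Suc d)
  then obtain xs where xs: "distinct xs" "length xs = d" "set xs \<subseteq> V"
     "\<forall>k<length xs. p (xs!k) = s \<or> p (xs!k) \<in> set (take k xs)" by auto
  have fin: "finite V" using T unfolding agg_tree_def by simp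
  obtain u where u: "u \<in> V" "u \<notin> set xs"
  proof (rule ccontr)
    assume "\<not> thesis"
    then have "V \<subseteq> set xs" using that by blast
    then have "card V \<le> card (set xs)" by (simp add: card_mono)
    then show False using xs(1,2) Suc.prems distinct_card by fastforce
  qed
  have ex: "\<forall>v. v \<in> V \<and> v \<notin> set xs \<and> (p^^k) v = s \<longrightarrow>
     (\<exists>v'. v' \<in> V \<and> v' \<notin> set xs \<and> (p v' = s \<or> p v' \<in> set xs))" for k
  proof (induction k)
    case 0 then show ?case using T unfolding agg_tree_def by auto
  next
    case (Suc k)
    show ?case
    proof (intro allI impI)
      fix v assume v: "v \<in> V \<and> v \<notin> set xs \<and> (p^^Suc k) v = s"
      show "\<exists>v'. v' \<in> V \<and> v' \<notin> set xs \<and> (p v' = s \<or> p v' \<in> set xs)"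
      proof (cases "p v = s \<or> p v \<in> set xs")
        case True then show ?thesis using v by blast
      next
        case False
        then have "p v \<in> V" using T v unfolding agg_tree_def by auto
        moreover have "(p^^k) (p v) = s" using v by (simp add: funpow_Suc_right del: funpow.simps)
        ultimately show ?thesis using Suc.IH False by blast
      qed
    qed
  qed
  obtain k where "(p^^k) u = s" using T u unfolding agg_tree_def by auto
  then obtain v where v: "v \<in> V" "v \<notin> set xs" "p v = s \<or> p v \<in> set xs" using ex u by blast
  show ?case
  proof (intro exI[of _ "xs @ [v]"] conjI)
    show "distinct (xs @ [v])" using xs v by simp
    show "length (xs @ [v]) = Suc d" using xs by simp
    show "set (xs @ [v]) \<subseteq> V" using xs v by simp
    show "\<forall>k<length (xs@[v]). p ((xs@[v])!k) = s \<or> p ((xs@[v])!k) \<in> set (take k (xs@[v]))"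
    proof (intro allI impI)
      fix k assume "k < length (xs@[v])"
      then consider "k < length xs" | "k = length xs" by fastforce
      then show "p ((xs@[v])!k) = s \<or> p ((xs@[v])!k) \<in> set (take k (xs@[v]))"
      proof cases
        case 1 then show ?thesis using xs(4) by (simp add: nth_append)
      next
        case 2 then show ?thesis using v by (simp add: nth_append)
      qed
    qed
  qed
qed

lemma part3:
  assumes T: "agg_tree V s p" and D1: "D \<ge> 1" and cD: "card V \<ge> D"
  shows "max_qoa V s p D \<ge> D"
proof -
  obtain xs where xs: "distinct xs" "length xs = D" "set xs \<subseteq> V"
     "\<forall>k<length xs. p (xs!k) = s \<or> p (xs!k) \<in> set (take k xs)" using build_list[OF T cD] by blast
  define idx where "idx x = (THE k. k < D \<and> xs!k = x)" for x
  have idx: "idx (xs!k) = k" if "k < D" for k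
    unfolding idx_def using that xs(1,2) by (intro the_equality) (auto simp: nth_eq_iff_index_eq)
  define W where "W x = D - 1 - idx x" for x
  have sV: "s \<notin> V" and fin: "finite V" using T unfolding agg_tree_def by auto
  have F: "feasible V s p D (\<lambda>x. x \<in> set xs) W"
    unfolding feasible_def
  proof (intro conjI)
    show "\<forall>i\<in>V. i \<in> set xs \<longrightarrow> W i < D" using D1 by (auto simp: W_def)
  next
    show "\<forall>j\<in>insert s {i\<in>V. i \<in> set xs}. inj_on W {i\<in>V. i \<in> set xs \<and> p i = j} \<and> (\<forall>i\<in>V. i \<in> set xs \<and> p i = j \<longrightarrow> W i < wait s D W j)"
    proof (rule ballI, rule conjI)
    fix j assume j: "j \<in> insert s {i\<in>V. i \<in> set xs}"
    show "inj_on W {i\<in>V. i \<in> set xs \<and> p i = j}"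
    proof (rule inj_onI)
      fix x y assume x: "x \<in> {i\<in>V. i \<in> set xs \<and> p i = j}" and y: "y \<in> {i\<in>V. i \<in> set xs \<and> p i = j}"
        and e: "W x = W y"
      obtain a where a: "a < D" "x = xs!a" using x xs(2) by (auto simp: in_set_conv_nth)
      obtain b where b: "b < D" "y = xs!b" using y xs(2) by (auto simp: in_set_conv_nth)
      have "a = b" using e a b idx[of a] idx[of b] by (simp add: W_def)
      then show "x = y" using a b by simp
    qed
    show "\<forall>i\<in>V. i \<in> set xs \<and> p i = j \<longrightarrow> W i < wait s D W j"
    proof (intro ballI impI)
      fix i assume i: "i \<in> V" "i \<in> set xs \<and> p i = j"
      then obtain a where a: "a < D" "i = xs!a" "p i = j" using xs(2) by (auto simp: in_set_conv_nth)
      show "W i < wait s D W j"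
      proof (cases "j = s")
        case True then show ?thesis using D1 by (simp add: wait_def W_def)
      next
        case False
        then have "p i \<in> set (take a xs)" using xs(4) a xs(2) by auto
        then obtain b where b: "b < a" "p i = xs!b" by (auto simp: in_set_conv_nth)
        then show ?thesis using False a idx[of a] idx[of b] by (simp add: wait_def W_def)
      qed
    qed
  qed
  qed
  have ancsub: "anc s p (xs!a) \<subseteq> set xs" if "a < D" for a
    using that
  proof (induction a rule: less_induct)
    case (less a)
    have ne: "xs!a \<noteq> s" using xs(2,3) sV less.prems by (metis nth_mem subsetD)
    have A: "anc s p (xs!a) = insert (xs!a) (anc s p (p (xs!a)))" using anc_rec[OF ne] .
    show ?case
    proof (cases "p (xs!a) = s")
      case True then show ?thesis using A anc_sink[of s p] less.prems xs(2) by simp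
    next
      case False
      then have "p (xs!a) \<in> set (take a xs)" using xs(4) less.prems xs(2) by auto
      then obtain b where b: "b < a" "p (xs!a) = xs!b" by (auto simp: in_set_conv_nth)
      then have "anc s p (p (xs!a)) \<subseteq> set xs" using less.IH[of b] less.prems by simp
      then show ?thesis using A less.prems xs(2) by simp
    qed
  qed
  have Ceq: "{i\<in>V. \<forall>j\<in>anc s p i. j \<in> set xs} = set xs"
  proof
    show "{i\<in>V. \<forall>j\<in>anc s p i. j \<in> set xs} \<subseteq> set xs"
    proof
      fix i assume i: "i \<in> {i\<in>V. \<forall>j\<in>anc s p i. j \<in> set xs}"
      then have "i \<noteq> s" using sV by auto
      then have "i \<in> anc s p i" by (rule anc_self)
      then show "i \<in> set xs" using i by blast
    qed
    show "set xs \<subseteq> {i\<in>V. \<forall>j\<in>anc s p i. j \<in> set xs}"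
    proof
      fix x assume "x \<in> set xs"
      then obtain a where a: "a < D" "x = xs!a" using xs(2) by (auto simp: in_set_conv_nth)
      then have "anc s p x \<subseteq> set xs" using ancsub by simp
      moreover have "x \<in> V" using \<open>x \<in> set xs\<close> xs(3) by blast
      ultimately show "x \<in> {i\<in>V. \<forall>j\<in>anc s p i. j \<in> set xs}" by blast
    qed
  qed
  have "qoa V s p (\<lambda>x. x \<in> set xs) = D" unfolding qoa_def using Ceq distinct_card[OF xs(1)] xs(2) by simp
  then show ?thesis using max_ge[OF fin F] by simp
qed

lemma chain_pow: assumes "\<forall>k. Suc k < length xs \<longrightarrow> p (xs!Suc k) = xs!k"
  shows "m \<le> a \<Longrightarrow> a < length xs \<Longrightarrow> (p^^m) (xs!a) = xs!(a-m)"
proof (induction m)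
  case 0 then show ?case by simp
next
  case (Suc m)
  then have "(p^^m)(xs!a) = xs!(a-m)" by simp
  moreover have "a - m = Suc (a - Suc m)" using Suc.prems by simp
  ultimately have "(p^^Suc m)(xs!a) = p (xs!(Suc (a - Suc m)))" by simp
  also have "\<dots> = xs!(a - Suc m)" using assms Suc.prems by simp
  finally show ?case .
qed

lemma chain_agg: assumes C: "chain_tree V s p" shows "agg_tree V s p"
proof -
  obtain xs where xs: "distinct xs" "set xs = V" "xs \<noteq> []" "p (xs!0) = s"
     "\<forall>k. Suc k < length xs \<longrightarrow> p (xs!Suc k) = xs!k" and sV: "s \<notin> V"
    using C unfolding chain_tree_def by blast
  show ?thesis unfolding agg_tree_def
  proof (intro conjI ballI)
    show "finite V" using xs(2) by auto
    show "s \<notin> V" using sV .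
    fix i assume "i \<in> V"
    then obtain a where a: "a < length xs" "i = xs!a" using xs(2) by (auto simp: in_set_conv_nth)
    show "p i \<in> insert s V"
    proof (cases a)
      case 0 then show ?thesis using a xs by simp
    next
      case (Suc b) then show ?thesis using a xs(2,5) by auto
    qed
    have "(p^^a) i = xs!0" using chain_pow[OF xs(5), of a a] a by simp
    then have "(p^^Suc a) i = s" using xs(4) by simp
    then show "\<exists>k. (p^^k) i = s" by blast
  qed
qed

lemma chain_upper:
  assumes C: "chain_tree V s p" and F: "feasible V s p D n W"
  shows "qoa V s p n \<le> D"
proof -
  have T: "agg_tree V s p" by (rule chain_agg[OF C])
  obtain xs where xs: "distinct xs" "set xs = V" "xs \<noteq> []" "p (xs!0) = s"
     "\<forall>k. Suc k < length xs \<longrightarrow> p (xs!Suc k) = xs!k" and sV: "s \<notin> V"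
    using C unfolding chain_tree_def by blast
  let ?C = "{i\<in>V. \<forall>j\<in>anc s p i. n j}"
  have anc_lt: "xs!a \<in> anc s p (xs!b)" if "a \<le> b" "b < length xs" for a b
  proof -
    have "xs!a = (p^^(b-a)) (xs!b)" using chain_pow[OF xs(5), of "b-a" b] that by simp
    moreover have "\<forall>m\<le>b-a. (p^^m)(xs!b) \<noteq> s"
    proof (intro allI impI)
      fix m assume "m \<le> b-a"
      then have "(p^^m)(xs!b) = xs!(b-m)" using chain_pow[OF xs(5), of m b] that by simp
      moreover have "xs!(b-m) \<in> V" using xs(2) that by auto
      ultimately show "(p^^m)(xs!b) \<noteq> s" using sV by auto
    qed
    ultimately show ?thesis unfolding anc_def by blast
  qed
  have inj: "inj_on W ?C"
  proof (rule inj_onI)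
    fix x y assume x: "x \<in> ?C" and y: "y \<in> ?C" and e: "W x = W y"
    obtain a where a: "a < length xs" "x = xs!a" using x xs(2) by (auto simp: in_set_conv_nth)
    obtain b where b: "b < length xs" "y = xs!b" using y xs(2) by (auto simp: in_set_conv_nth)
    have cx: "cnt V s p n x" and cy: "cnt V s p n y" using x y unfolding cnt_def by auto
    show "x = y"
    proof (rule ccontr)
      assume ne: "x \<noteq> y"
      show False
      proof (cases "a \<le> b")
        case True
        then have "x \<in> anc s p y" using anc_lt a b by simp
        then have "W y < W x" using lemA'(2)[OF T F cy] ne by auto
        then show False using e by simp
      next
        case False
        then have "y \<in> anc s p x" using anc_lt a b by simp
        then have "W x < W y" using lemA'(2)[OF T F cx] ne by auto
        then show False using e by simp
      qed
    qed
  qed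
  have "W ` ?C \<subseteq> {..<D}"
  proof
    fix w assume "w \<in> W ` ?C"
    then obtain i where i: "i \<in> ?C" "w = W i" by auto
    have "i \<noteq> s" using i sV by auto
    then have "i \<in> anc s p i" by (rule anc_self)
    then have ni: "n i" using i(1) by blast
    have "\<forall>i\<in>V. n i \<longrightarrow> W i < D" using F unfolding feasible_def by blast
    then show "w \<in> {..<D}" using i ni by auto
  qed
  then have "card (W ` ?C) \<le> D" by (metis card_lessThan card_mono finite_lessThan)
  then show ?thesis unfolding qoa_def using card_image[OF inj] by simp
qed

theorem theorem1:
  fixes D :: nat
  assumes "D \<ge> 1"
  shows "(\<forall>(V::nat set) s p. agg_tree V s p \<longrightarrow> max_qoa V s p D \<le> 2 ^ D - 1)
       \<and> (\<exists>(V::nat set) s p. agg_tree V s p \<and> max_qoa V s p D = 2 ^ D - 1)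
       \<and> (\<forall>(V::nat set) s p. agg_tree V s p \<and> card V \<ge> D \<longrightarrow> max_qoa V s p D \<ge> D)
       \<and> (\<forall>(V::nat set) s p. chain_tree V s p \<and> card V \<ge> D \<longrightarrow> max_qoa V s p D = D)"
proof (intro conjI allI impI)
  fix V :: "nat set" and s p
  assume T: "agg_tree V s p"
  then show "max_qoa V s p D \<le> 2 ^ D - 1"
    using max_le[of V s p D] qoa_bound1[OF T] unfolding agg_tree_def by blast
next
  show "\<exists>(V::nat set) s p. agg_tree V s p \<and> max_qoa V s p D = 2 ^ D - 1"
    using opt_tree[OF assms] by blast
next
  fix V :: "nat set" and s p
  assume "agg_tree V s p \<and> card V \<ge> D"
  then show "max_qoa V s p D \<ge> D" using part3[of V s p D] assms by auto
next
  fix V :: "nat set" and s p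
  assume a: "chain_tree V s p \<and> card V \<ge> D"
  then have T: "agg_tree V s p" using chain_agg by auto
  have "max_qoa V s p D \<le> D"
    using max_le[of V s p D D] chain_upper[of V s p D] a T unfolding agg_tree_def by auto
  moreover have "max_qoa V s p D \<ge> D" using part3[of V s p D] assms a T by auto
  ultimately show "max_qoa V s p D = D" by simp
qed

end
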